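(* Let $D\subseteq\mathbb{R}$ and let $f,g:D\to\mathbb{R}$ be ordinal decreasing on $D$. Then $f+g$ is ordinal decreasing on $D$.
   Context: For $h:D\to\mathbb{R}$, a strictly decreasing sequence $x_1>x_2>\cdots$ in $D$ is $h$-bad if $h(x_1)>h(x_2)>\cdots$; $h$ is ordinal decreasing if there is no infinite $h$-bad sequence. *)

theory Defs
  imports Main "HOL.Real"
begin

definition h_bad :: "real set \<Rightarrow> (real \<Rightarrow> real) \<Rightarrow> (nat \<Rightarrow> real) \<Rightarrow> bool" where
  "h_bad D h x \<longleftrightarrow> (\<forall>n. x n \<in> D) \<and> (\<forall>n. x (Suc n) < x n) \<and> (\<forall>n. h (x (Suc n)) < h (x n))"

definition ordinal_decreasing :: "real set \<Rightarrow> (real \<Rightarrow> real) \<Rightarrow> bool" where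
  "ordinal_decreasing D h \<longleftrightarrow> \<not> (\<exists>x. h_bad D h x)"

end

theory Submission
  imports Defs "HOL-Library.Ramsey"
begin
lemma od_wf:
  assumes "ordinal_decreasing D h"
  shows "wf {(a,b). a \<in> D \<and> b \<in> D \<and> a < b \<and> h a < h b}"
  unfolding wf_iff_no_infinite_down_chain
proof (rule notI)
  assume "\<exists>s. \<forall>i. (s (Suc i), s i) \<in> {(a,b). a \<in> D \<and> b \<in> D \<and> a < b \<and> h a < h b}"
  then obtain s where "\<forall>i. (s (Suc i), s i) \<in> {(a,b). a \<in> D \<and> b \<in> D \<and> a < b \<and> h a < h b}" by blast
  then have "h_bad D h s" unfolding h_bad_def by blast
  then show False using assms unfolding ordinal_decreasing_def by blast
qed

theorem lemma4:
  fixes D :: "real set" and f g :: "real \<Rightarrow> real"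
  assumes "ordinal_decreasing D f" and "ordinal_decreasing D g"
  shows "ordinal_decreasing D (\<lambda>x. f x + g x)"
proof -
  define r where "r = {(a,b). a \<in> D \<and> b \<in> D \<and> a < b \<and> f a + g a < f b + g b}"
  define T where "T = (\<lambda>i::nat. if i = 0 then {(a,b). a \<in> D \<and> b \<in> D \<and> a < b \<and> f a < f b}
                      else {(a,b). a \<in> D \<and> b \<in> D \<and> a < b \<and> g a < g b})"
  have tr: "trans r" unfolding trans_def r_def by auto
  have w: "\<forall>i<2. wf (T i)" using od_wf[OF assms(1)] od_wf[OF assms(2)] unfolding T_def by auto
  have sub: "r \<subseteq> T 0 \<union> T 1"
    unfolding r_def T_def by auto
  have "T 0 \<union> T 1 = (\<Union>i<2. T i)" by (auto simp: lessThan_def less_2_cases_iff)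
  with sub have "r \<subseteq> (\<Union>i<2. T i)" by simp
  with w have "disj_wf r" unfolding disj_wf by blast
  then have "wf r" using trans_disj_wf_implies_wf tr by blast
  show ?thesis unfolding ordinal_decreasing_def
  proof
    assume "\<exists>x. h_bad D (\<lambda>x. f x + g x) x"
    then obtain s where "h_bad D (\<lambda>x. f x + g x) s" by blast
    then have "\<forall>i. (s (Suc i), s i) \<in> r" unfolding h_bad_def r_def by simp
    then show False using \<open>wf r\<close> unfolding wf_iff_no_infinite_down_chain by blast
  qed
qed
end
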